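(* Let $\Bbbk$ be a field of characteristic $0$ and let $J$ be a Jordan dialgebra over $\Bbbk$ generated by one element. Then $J$ is special, i.e. $J$ is isomorphic to a subdialgebra of $D^{(+)}$ for some associative dialgebra $D$.
   Context: A 0-dialgebra is a vector space with bilinear operations $\vdash,\dashv$ satisfying $(x\dashv y)\vdash z=(x\vdash y)\vdash z$ and $x\dashv(y\vdash z)=x\dashv(y\dashv z)$. For a nonassociative multilinear polynomial $f(x_1,\dots,x_n)$ and an index $i$, $f(x_1,\dots,\dot x_i,\dots,x_n)$ denotes the dialgebra polynomial obtained by replacing each product $uv$ in each monomial by $u\dashv v$ if $x_i$ occurs in $u$ and by $u\vdash v$ otherwise (i.e. all operation signs point to $x_i$). A Jordan dialgebra is a 0-dialgebra satisfying $x_1\vdash x_2=x_2\dashv x_1$ and $J(x_1,\dots,\dot x_i,\dots,x_4)=0$ for $i=1,2,3,4$, where $J(x_1,x_2,x_3,x_4)=x_1(x_2(x_3x_4))+(x_2(x_1x_3))x_4+x_3(x_2(x_1x_4))-(x_1x_2)(x_3x_4)-(x_1x_3)(x_2x_4)-(x_3x_2)(x_1x_4)$. An associative dialgebra is a dialgebra satisfying the two 0-identities and $(x\vdash y)\vdash z=x\vdash(y\vdash z)$, $(x\dashv y)\dashv z=x\dashv(y\dashv z)$, $(x\vdash y)\dashv z=x\vdash(y\dashv z)$; for such $D$, $D^{(+)}$ is $D$ with $a\vdash_+b=\tfrac12(a\vdash b+b\dashv a)$, $a\dashv_+b=\tfrac12(a\dashv b+b\vdash a)$. *)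

theory Defs
  imports Complex_Main "HOL-Library.Function_Algebras"
begin

datatype nmon = V nat | M nmon nmon

fun vars :: "nmon \<Rightarrow> nat set" where
  "vars (V j) = {j}"
| "vars (M u v) = vars u \<union> vars v"

text \<open>Evaluation of the dialgebra monomial obtained from a nonassociative monomial by
  pointing every operation sign to the variable with index i: a product u v becomes
  u -| v (operation dl) if x_i occurs in u, and u |- v (operation dr) otherwise.\<close>
fun eval_dot :: "('v \<Rightarrow> 'v \<Rightarrow> 'v) \<Rightarrow> ('v \<Rightarrow> 'v \<Rightarrow> 'v) \<Rightarrow> nat \<Rightarrow> (nat \<Rightarrow> 'v) \<Rightarrow> nmon \<Rightarrow> 'v" where
  "eval_dot dl dr i x (V j) = x j"
| "eval_dot dl dr i x (M u v) =
     (if i \<in> vars u then dl else dr) (eval_dot dl dr i x u) (eval_dot dl dr i x v)"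

definition J_dot :: "('v::ab_group_add \<Rightarrow> 'v \<Rightarrow> 'v) \<Rightarrow> ('v \<Rightarrow> 'v \<Rightarrow> 'v) \<Rightarrow> nat \<Rightarrow> (nat \<Rightarrow> 'v) \<Rightarrow> 'v" where
  "J_dot dl dr i x =
      eval_dot dl dr i x (M (V 1) (M (V 2) (M (V 3) (V 4))))
    + eval_dot dl dr i x (M (M (V 2) (M (V 1) (V 3))) (V 4))
    + eval_dot dl dr i x (M (V 3) (M (V 2) (M (V 1) (V 4))))
    - eval_dot dl dr i x (M (M (V 1) (V 2)) (M (V 3) (V 4)))
    - eval_dot dl dr i x (M (M (V 1) (V 3)) (M (V 2) (V 4)))
    - eval_dot dl dr i x (M (M (V 3) (V 2)) (M (V 1) (V 4)))"

text \<open>Convention: dl is the operation -| and dr is the operation |- .\<close>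

definition subspace_on :: "('k::field \<Rightarrow> 'v::ab_group_add \<Rightarrow> 'v) \<Rightarrow> 'v set \<Rightarrow> bool" where
  "subspace_on s A \<longleftrightarrow> 0 \<in> A \<and> (\<forall>x\<in>A. \<forall>y\<in>A. x + y \<in> A) \<and> (\<forall>c. \<forall>x\<in>A. s c x \<in> A)"

definition bilinear_on :: "('k::field \<Rightarrow> 'v::ab_group_add \<Rightarrow> 'v) \<Rightarrow> 'v set \<Rightarrow> ('v \<Rightarrow> 'v \<Rightarrow> 'v) \<Rightarrow> bool" where
  "bilinear_on s A m \<longleftrightarrow>
     (\<forall>x\<in>A. \<forall>y\<in>A. m x y \<in> A) \<and>
     (\<forall>x\<in>A. \<forall>y\<in>A. \<forall>z\<in>A. m (x + y) z = m x z + m y z \<and> m z (x + y) = m z x + m z y) \<and>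
     (\<forall>c. \<forall>x\<in>A. \<forall>y\<in>A. m (s c x) y = s c (m x y) \<and> m x (s c y) = s c (m x y))"

definition zero_dialgebra_on ::
  "('k::field \<Rightarrow> 'v::ab_group_add \<Rightarrow> 'v) \<Rightarrow> 'v set \<Rightarrow> ('v \<Rightarrow> 'v \<Rightarrow> 'v) \<Rightarrow> ('v \<Rightarrow> 'v \<Rightarrow> 'v) \<Rightarrow> bool" where
  "zero_dialgebra_on s A dl dr \<longleftrightarrow>
     vector_space s \<and> subspace_on s A \<and> bilinear_on s A dl \<and> bilinear_on s A dr \<and>
     (\<forall>x\<in>A. \<forall>y\<in>A. \<forall>z\<in>A. dr (dl x y) z = dr (dr x y) z \<and> dl x (dr y z) = dl x (dl y z))"

definition assoc_dialgebra_on ::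
  "('k::field \<Rightarrow> 'v::ab_group_add \<Rightarrow> 'v) \<Rightarrow> 'v set \<Rightarrow> ('v \<Rightarrow> 'v \<Rightarrow> 'v) \<Rightarrow> ('v \<Rightarrow> 'v \<Rightarrow> 'v) \<Rightarrow> bool" where
  "assoc_dialgebra_on s A dl dr \<longleftrightarrow>
     zero_dialgebra_on s A dl dr \<and>
     (\<forall>x\<in>A. \<forall>y\<in>A. \<forall>z\<in>A.
        dr (dr x y) z = dr x (dr y z) \<and>
        dl (dl x y) z = dl x (dl y z) \<and>
        dl (dr x y) z = dr x (dl y z))"

definition jordan_dialgebra_on ::
  "('k::field \<Rightarrow> 'v::ab_group_add \<Rightarrow> 'v) \<Rightarrow> 'v set \<Rightarrow> ('v \<Rightarrow> 'v \<Rightarrow> 'v) \<Rightarrow> ('v \<Rightarrow> 'v \<Rightarrow> 'v) \<Rightarrow> bool" where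
  "jordan_dialgebra_on s A dl dr \<longleftrightarrow>
     zero_dialgebra_on s A dl dr \<and>
     (\<forall>x\<in>A. \<forall>y\<in>A. dr x y = dl y x) \<and>
     (\<forall>x. (\<forall>j. x j \<in> A) \<longrightarrow> (\<forall>i\<in>{1..4}. J_dot dl dr i x = 0))"

inductive_set generated ::
  "('k \<Rightarrow> 'v::ab_group_add \<Rightarrow> 'v) \<Rightarrow> ('v \<Rightarrow> 'v \<Rightarrow> 'v) \<Rightarrow> ('v \<Rightarrow> 'v \<Rightarrow> 'v) \<Rightarrow> 'v set \<Rightarrow> 'v set"
  for s dl dr X where
  gen_base: "x \<in> X \<Longrightarrow> x \<in> generated s dl dr X"
| gen_zero: "0 \<in> generated s dl dr X"
| gen_add: "x \<in> generated s dl dr X \<Longrightarrow> y \<in> generated s dl dr X \<Longrightarrow> x + y \<in> generated s dl dr X"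
| gen_scale: "x \<in> generated s dl dr X \<Longrightarrow> s c x \<in> generated s dl dr X"
| gen_dl: "x \<in> generated s dl dr X \<Longrightarrow> y \<in> generated s dl dr X \<Longrightarrow> dl x y \<in> generated s dl dr X"
| gen_dr: "x \<in> generated s dl dr X \<Longrightarrow> y \<in> generated s dl dr X \<Longrightarrow> dr x y \<in> generated s dl dr X"

definition fscale :: "'k::field \<Rightarrow> ('b \<Rightarrow> 'k) \<Rightarrow> ('b \<Rightarrow> 'k)" where
  "fscale c f = (\<lambda>b. c * f b)"

text \<open>The underlying vector space of D is realised as a subspace of the function space
  'v list => 'k (pointwise operations); this is no loss of generality since the
  subdialgebra of D generated by the image of J has dimension at most |'v list|.
  The embedding f is an injective linear map respecting the operations of D^(+):
  a -|+ b = 1/2 (a -| b + b |- a), a |-+ b = 1/2 (a |- b + b -| a).\<close>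
definition special_dialgebra ::
  "('k::field \<Rightarrow> 'v::ab_group_add \<Rightarrow> 'v) \<Rightarrow> ('v \<Rightarrow> 'v \<Rightarrow> 'v) \<Rightarrow> ('v \<Rightarrow> 'v \<Rightarrow> 'v) \<Rightarrow> bool" where
  "special_dialgebra s dl dr \<longleftrightarrow>
     (\<exists>(D :: ('v list \<Rightarrow> 'k) set) Dl Dr f.
        assoc_dialgebra_on fscale D Dl Dr \<and>
        inj f \<and> f ` UNIV \<subseteq> D \<and>
        (\<forall>x y. f (x + y) = f x + f y) \<and>
        (\<forall>c x. f (s c x) = fscale c (f x)) \<and>
        (\<forall>x y. f (dl x y) = fscale (1/2) (Dl (f x) (f y) + Dr (f y) (f x))) \<and>
        (\<forall>x y. f (dr x y) = fscale (1/2) (Dr (f x) (f y) + Dl (f y) (f x))))"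

end

theory Submission
  imports Defs "HOL-Computational_Algebra.Polynomial" "HOL-Library.Product_Plus"
begin

lemma grp1: fixes A :: "'a::ab_group_add"
  shows "A + B + B - C - D - E = 0 \<Longrightarrow> A = A' \<Longrightarrow> D = E \<Longrightarrow> A' = C + (E + E) - (B + B)"
  by (simp add: algebra_simps)
lemma grp2: fixes A :: "'a::ab_group_add"
  shows "A + B + C - D - E - F = 0 \<Longrightarrow> E = F \<Longrightarrow> B = D + (E + E) - A - C"
  by (simp add: algebra_simps)
lemma grp3: fixes A :: "'a::ab_group_add"
  shows "A + A + A - B - B - B = 0 \<Longrightarrow> A + A + A = B + B + B"
  by (simp add: algebra_simps)

locale VS = vector_space sc for sc :: "'a::field \<Rightarrow> 'b::ab_group_add \<Rightarrow> 'b"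
begin

definition lin :: "('b \<Rightarrow> 'b) \<Rightarrow> bool" where
  "lin T \<longleftrightarrow> (\<forall>x y. T (x + y) = T x + T y) \<and> (\<forall>c x. T (sc c x) = sc c (T x))"

lemma linD: fixes T :: "'b \<Rightarrow> 'b" and x y :: 'b assumes "lin T" shows "T (x + y) = T x + T y" "T (sc c x) = sc c (T x)"
  "T 0 = 0" "T (- x) = - T x" "T (x - y) = T x - T y"
proof -
  show a: "T (x + y) = T x + T y" for x y using assms by (simp add: lin_def)
  show b: "T (sc c x) = sc c (T x)" for c x using assms by (simp add: lin_def)
  show c: "T 0 = 0" using b[of 0 0] by simp
  show d: "T (- x) = - T x" for x using b[of "-1" x] by (simp add: scale_minus_left)
  show "T (x - y) = T x - T y" using a[of x "-y"] d[of y] by simp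
qed

lemma lin_sum: "lin T \<Longrightarrow> T (sum f A) = (\<Sum>i\<in>A. T (f i))"
  by (induction A rule: infinite_finite_induct) (auto simp: linD)

definition lc :: "'a poly \<Rightarrow> (nat \<Rightarrow> 'b \<Rightarrow> 'b) \<Rightarrow> 'b \<Rightarrow> 'b" where
  "lc h F z = (\<Sum>n<Suc (degree h). sc (coeff h n) (F n z))"

lemma lc_bound: assumes "degree h < N" shows "lc h F z = (\<Sum>n<N. sc (coeff h n) (F n z))"
  unfolding lc_def
proof (rule sum.mono_neutral_left)
  show "\<forall>i\<in>{..<N} - {..<Suc (degree h)}. sc (coeff h i) (F i z) = 0"
    by (auto simp: coeff_eq_0)
qed (use assms in auto)

lemma lc_0[simp]: "lc 0 F z = 0"
  by (simp add: lc_def)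

lemma lc_pCons: "lc (pCons a p) F z = sc a (F 0 z) + lc p (\<lambda>n. F (Suc n)) z"
proof -
  have d: "degree (pCons a p) < Suc (Suc (degree p))"
    using degree_pCons_le[of a p] by simp
  have "lc (pCons a p) F z = (\<Sum>n<Suc (Suc (degree p)). sc (coeff (pCons a p) n) (F n z))"
    by (rule lc_bound[OF d])
  also have "\<dots> = sc a (F 0 z) + (\<Sum>n<Suc (degree p). sc (coeff p n) (F (Suc n) z))"
    by (subst sum.lessThan_Suc_shift) simp
  finally show ?thesis by (simp add: lc_def)
qed

lemma lc_add: "lc (p + q) F z = lc p F z + lc q F z"
proof -
  define N where "N = Suc (max (degree p) (degree q))"
  have "degree (p + q) < N" using degree_add_le_max[of p q] by (simp add: N_def)
  then have "lc (p + q) F z = (\<Sum>n<N. sc (coeff (p+q) n) (F n z))" by (rule lc_bound)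
  also have "\<dots> = (\<Sum>n<N. sc (coeff p n) (F n z)) + (\<Sum>n<N. sc (coeff q n) (F n z))"
    by (simp add: scale_left_distrib sum.distrib del: sum.lessThan_Suc)
  also have "\<dots> = lc p F z + lc q F z"
    by (subst (1 2) lc_bound[symmetric]) (auto simp: N_def)
  finally show ?thesis .
qed

lemma lc_smult: "lc (smult c p) F z = sc c (lc p F z)"
proof -
  have "degree (smult c p) < Suc (degree p)" by (simp add: le_imp_less_Suc)
  then have "lc (smult c p) F z = (\<Sum>n<Suc (degree p). sc (coeff (smult c p) n) (F n z))" by (rule lc_bound)
  then show ?thesis by (simp add: lc_def scale_sum_right del: sum.lessThan_Suc)
qed

lemma lc_uminus: "lc (- p) F z = - lc p F z"
  using lc_smult[of "-1" p F z] by (simp add: scale_minus_left)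

lemma lc_diff: "lc (p - q) F z = lc p F z - lc q F z"
  using lc_add[of p "-q" F z] lc_uminus[of q F z] by simp

lemma lc_Fadd: "lc h (\<lambda>n w. F n w + G n w) z = lc h F z + lc h G z"
  by (simp add: lc_def scale_right_distrib sum.distrib del: sum.lessThan_Suc)

lemma lc_Fscale: "lc h (\<lambda>n w. sc c (F n w)) z = sc c (lc h F z)"
  by (simp add: lc_def scale_sum_right mult.commute del: sum.lessThan_Suc)

lemma lc_Fminus: "lc h (\<lambda>n w. - F n w) z = - lc h F z"
  using lc_Fscale[of h "-1" F z] by (simp add: scale_minus_left)

lemma lc_Fdiff: "lc h (\<lambda>n w. F n w - G n w) z = lc h F z - lc h G z"
  using lc_Fadd[of h F "\<lambda>n w. - G n w" z] lc_Fminus[of h G z] by simp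

lemma lc_map: "lin T \<Longrightarrow> T (lc h F z) = lc h (\<lambda>n w. T (F n w)) z"
  by (simp add: lc_def lin_sum linD del: sum.lessThan_Suc)

lemma lc_cong: "(\<And>n. F n z = G n z) \<Longrightarrow> lc h F z = lc h G z"
  by (simp add: lc_def)

lemma lc_arg: "lc h F (T z) = lc h (\<lambda>n w. F n (T w)) z"
  by (simp add: lc_def)

lemma lin_lc: "(\<And>n. lin (F n)) \<Longrightarrow> lin (lc h F)"
  unfolding lin_def lc_def
  by (simp add: linD scale_right_distrib sum.distrib scale_sum_right mult.commute del: sum.lessThan_Suc)

lemma lin_comp: "lin S \<Longrightarrow> lin T \<Longrightarrow> lin (\<lambda>x. S (T x))"
  by (simp add: lin_def)

lemma lin_add: "lin S \<Longrightarrow> lin T \<Longrightarrow> lin (\<lambda>x. S x + T x)"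
  by (simp add: lin_def scale_right_distrib algebra_simps)

lemma lin_diff: "lin S \<Longrightarrow> lin T \<Longrightarrow> lin (\<lambda>x. S x - T x)"
  by (simp add: lin_def scale_right_diff_distrib algebra_simps)

lemma lin_id: "lin (\<lambda>x. x)" by (simp add: lin_def)

lemma lin_funpow: "lin T \<Longrightarrow> lin (T ^^ n)"
  by (induction n) (auto simp: lin_def)

definition peval :: "'a poly \<Rightarrow> ('b \<Rightarrow> 'b) \<Rightarrow> 'b \<Rightarrow> 'b" where
  "peval p T = lc p (\<lambda>n. T ^^ n)"

lemma peval_pCons: "lin T \<Longrightarrow> peval (pCons a p) T z = sc a z + T (peval p T z)"
  unfolding peval_def by (simp add: lc_pCons lc_map comp_def)

lemma peval_0[simp]: "peval 0 T z = 0" by (simp add: peval_def)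

lemma lin_peval: "lin T \<Longrightarrow> lin (peval p T)"
  unfolding peval_def by (rule lin_lc) (rule lin_funpow)

lemma peval_add: "peval (p + q) T z = peval p T z + peval q T z"
  by (simp add: peval_def lc_add)
lemma peval_diff: "peval (p - q) T z = peval p T z - peval q T z"
  by (simp add: peval_def lc_diff)
lemma peval_smult: "peval (smult c p) T z = sc c (peval p T z)"
  by (simp add: peval_def lc_smult)

lemma peval_mult: assumes "lin T" shows "peval (p * q) T z = peval p T (peval q T z)"
proof (induction p rule: pCons_induct)
  case (pCons a p)
  have "peval (pCons a p * q) T z = peval (smult a q + pCons 0 (p * q)) T z" by simp
  also have "\<dots> = sc a (peval q T z) + T (peval p T (peval q T z))"
    by (simp add: peval_add peval_smult peval_pCons[OF assms] pCons)
  also have "\<dots> = peval (pCons a p) T (peval q T z)" by (simp add: peval_pCons[OF assms])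
  finally show ?case .
qed simp

lemma peval_comm: assumes "lin S" "\<And>x. S (T x) = T (S x)"
  shows "S (peval p T z) = peval p T (S z)"
proof -
  have "S ((T ^^ n) w) = (T ^^ n) (S w)" for n w
    by (induction n) (auto simp: assms)
  then show ?thesis unfolding peval_def lc_map[OF assms(1)] lc_arg[of p _ S z] by (intro lc_cong) simp
qed

lemma peval_x: "lin T \<Longrightarrow> peval [:0, 1:] T z = T z"
  by (simp add: peval_pCons linD)

end

locale JD = VS s for s :: "'k::field_char_0 \<Rightarrow> 'v::ab_group_add \<Rightarrow> 'v" +
  fixes dl :: "'v \<Rightarrow> 'v \<Rightarrow> 'v" and a :: 'v
  assumes dl_addL: "dl (x + y) z = dl x z + dl y z"
    and dl_addR: "dl z (x + y) = dl z x + dl z y"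
    and dl_scL: "dl (s c x) y = s c (dl x y)"
    and dl_scR: "dl x (s c y) = s c (dl x y)"
    and zid: "dl z (dl x y) = dl z (dl y x)"
    and J1: "dl z (dl (dl a a) w) + dl (dl (dl z a) w) a + dl (dl (dl z a) w) a - dl (dl z w) (dl a a) - dl (dl z a) (dl a w) - dl (dl z a) (dl w a) = 0"
    and J4: "dl (dl (dl z w) a) a + dl z (dl (dl w a) a) + dl (dl (dl z a) a) w - dl (dl z w) (dl a a) - dl (dl z a) (dl w a) - dl (dl z a) (dl a w) = 0"
    and J2: "dl (dl z (dl a a)) a + dl (dl z (dl a a)) a + dl (dl z (dl a a)) a - dl (dl z a) (dl a a) - dl (dl z a) (dl a a) - dl (dl z a) (dl a a) = 0"
begin

definition P :: "'v \<Rightarrow> 'v" where "P z = dl z a"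
definition Q :: "'v \<Rightarrow> 'v" where "Q z = dl z (dl a a)"
definition E2 :: "'v \<Rightarrow> 'v" where "E2 z = P (P z) + P (P z) - Q z"

fun c :: "nat \<Rightarrow> 'v \<Rightarrow> 'v" where
  "c 0 z = z"
| "c (Suc 0) z = P z"
| "c (Suc (Suc n)) z = P (c (Suc n) z) + P (c (Suc n) z) - E2 (c n z)"

declare c.simps(3)[simp del]

lemma lin_R: "lin (\<lambda>z. dl z w)"
  by (simp add: lin_def dl_addL dl_scL)
lemma lin_L: "lin (\<lambda>z. dl w z)"
  by (simp add: lin_def dl_addR dl_scR)
lemma lin_P: "lin P" unfolding P_def[abs_def] by (rule lin_R)
lemma lin_Q: "lin Q" unfolding Q_def[abs_def] by (rule lin_R)
lemma lin_E2: "lin E2"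
proof -
  have "E2 = (\<lambda>z. (P (P z) + P (P z)) - Q z)" by (rule ext) (simp add: E2_def)
  then show ?thesis by (simp only: lin_diff[OF lin_add[OF lin_comp[OF lin_P lin_P] lin_comp[OF lin_P lin_P]] lin_Q])
qed

lemma lin_c: "lin (c n)"
proof (induction n rule: nat_less_induct)
  case (1 n)
  consider "n = 0" | "n = Suc 0" | m where "n = Suc (Suc m)"
    by (metis not0_implies_Suc)
  then show ?case
  proof cases
    case 1 then show ?thesis by (simp add: lin_id[unfolded id_def[symmetric]] lin_def)
  next
    case 2 then show ?thesis using lin_P by (simp add: lin_def)
  next
    case 3
    have e: "c n = (\<lambda>z. (P (c (Suc m) z) + P (c (Suc m) z)) - E2 (c m z))"
      by (rule ext) (simp add: 3 c.simps(3))
    have a: "lin (c m)" and b: "lin (c (Suc m))" using 1 3 by auto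
    show ?thesis unfolding e by (rule lin_diff[OF lin_add[OF lin_comp[OF lin_P b] lin_comp[OF lin_P b]] lin_comp[OF lin_E2 a]])
  qed
qed

lemma dl0R[simp]: "dl z 0 = 0" using linD(3)[OF lin_L] .
lemma dl0L[simp]: "dl 0 z = 0" using linD(3)[OF lin_R] .

lemma three: fixes x y :: 'v assumes "x + x + x = y + y + y" shows "x = y"
proof -
  have t: "s 3 w = w + w + w" for w :: 'v
  proof -
    have "s 3 w = s (1 + 1 + 1) w" by simp
    also have "\<dots> = w + w + w" by (simp only: scale_left_distrib scale_one)
    finally show ?thesis .
  qed
  have "s 3 x = s 3 y" using assms by (simp only: t)
  then show ?thesis by simp
qed

lemma PQ: "P (Q z) = Q (P z)"
  unfolding P_def Q_def by (rule three[OF grp3[OF J2]])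

lemma E2P: "E2 (P z) = P (E2 z)"
  by (simp add: E2_def PQ linD[OF lin_P])
lemma E2Q: "E2 (Q z) = Q (E2 z)"
  by (simp add: E2_def PQ linD[OF lin_Q])

lemma comm_c: assumes "lin T" "\<And>z. T (P z) = P (T z)" "\<And>z. T (Q z) = Q (T z)"
  shows "T (c n z) = c n (T z)"
proof (induction n z rule: c.induct)
  case (3 n z)
  have e: "T (E2 w) = E2 (T w)" for w by (simp add: E2_def linD[OF assms(1)] assms)
  show ?case by (simp add: linD[OF assms(1)] assms e 3 c.simps(3))
qed (simp_all add: assms)

lemma cP: "c n (P z) = P (c n z)"
  by (rule comm_c[symmetric]) (simp_all add: lin_P PQ)
lemma cQ: "c n (Q z) = Q (c n z)"
  by (rule comm_c[symmetric]) (simp_all add: lin_Q PQ)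

lemma JQ: "dl z (Q w) = Q (dl z w) + (dl (P z) (P w) + dl (P z) (P w)) - (P (dl (P z) w) + P (dl (P z) w))"
  unfolding P_def Q_def by (rule grp1[OF J1 zid zid])

lemma JP2: "dl z (P (P w)) = Q (dl z w) + (dl (P z) (P w) + dl (P z) (P w)) - P (P (dl z w)) - dl (P (P z)) w"
  unfolding P_def Q_def by (rule grp2[OF J4 zid])

end

context JD begin

abbreviation X :: "'k poly" where "X \<equiv> [:0, 1:]"

definition rep :: "'v \<Rightarrow> 'k poly \<Rightarrow> bool" where
  "rep y h \<longleftrightarrow> (\<forall>k z. dl z ((P ^^ k) y) = lc h (\<lambda>n. c (n + k)) z)"

lemma repD: "rep y h \<Longrightarrow> dl z ((P ^^ k) y) = lc h (\<lambda>n. c (n + k)) z"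
  by (simp add: rep_def)

lemma repS: "rep y h \<Longrightarrow> dl z (P ((P ^^ k) y)) = lc h (\<lambda>n. c (Suc (n + k))) z"
  using repD[of y h z "Suc k"] by simp

lemma repD0: "rep y h \<Longrightarrow> dl z y = lc h c z"
  using repD[of y h z 0] by simp

lemma lin_Pk: "lin (P ^^ k)" by (rule lin_funpow[OF lin_P])

lemma rep_0: "rep 0 0"
  by (simp add: rep_def linD[OF lin_Pk])

lemma rep_add: "rep y h \<Longrightarrow> rep y' h' \<Longrightarrow> rep (y + y') (h + h')"
  by (simp add: rep_def linD[OF lin_Pk] dl_addR lc_add)

lemma rep_diff: "rep y h \<Longrightarrow> rep y' h' \<Longrightarrow> rep (y - y') (h - h')"
  by (simp add: rep_def linD[OF lin_Pk] linD[OF lin_L] lc_diff)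

lemma rep_scale: "rep y h \<Longrightarrow> rep (s r y) (smult r h)"
  by (simp add: rep_def linD[OF lin_Pk] dl_scR lc_smult)

lemma rep_eq: "rep y h \<Longrightarrow> h = h' \<Longrightarrow> y = y' \<Longrightarrow> rep y' h'" by simp

lemma rep_P: assumes "rep y h" shows "rep (P y) (X * h)"
  unfolding rep_def
proof (intro allI)
  fix k z
  have "(P ^^ k) (P y) = P ((P ^^ k) y)" by (rule funpow_swap1[symmetric])
  then show "dl z ((P ^^ k) (P y)) = lc (X * h) (\<lambda>n. c (n + k)) z"
    using repS[OF assms, of z k] by (simp add: lc_pCons)
qed

lemma Pk_Q: "(P ^^ k) (Q y) = Q ((P ^^ k) y)"
  by (induction k) (simp_all add: PQ)

lemma c_rec: "c (Suc (Suc m)) w = Q (c m w) + (c (Suc m) (P w) + c (Suc m) (P w)) - (P (c m (P w)) + P (c m (P w)))"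
  by (simp add: cP E2_def algebra_simps c.simps(3))

lemma rep_Q: assumes "rep y h" shows "rep (Q y) (X^2 * h)"
  unfolding rep_def
proof (intro allI)
  fix k z
  define w where "w = (P ^^ k) y"
  have "dl z ((P ^^ k) (Q y)) = dl z (Q w)" by (simp add: Pk_Q w_def)
  also have "\<dots> = Q (dl z w) + (dl (P z) (P w) + dl (P z) (P w)) - (P (dl (P z) w) + P (dl (P z) w))"
    by (rule JQ)
  also have "\<dots> = lc h (\<lambda>n v. Q (c (n + k) v)) z + (lc h (\<lambda>n v. c (n + Suc k) (P v)) z + lc h (\<lambda>n v. c (n + Suc k) (P v)) z)
     - (lc h (\<lambda>n v. P (c (n + k) (P v))) z + lc h (\<lambda>n v. P (c (n + k) (P v))) z)"
    unfolding w_def repD[OF assms] repS[OF assms]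
    by (simp add: lc_map[OF lin_Q] lc_map[OF lin_P] lc_arg[where T=P])
  also have "\<dots> = lc h (\<lambda>n v. Q (c (n + k) v) + (c (n + Suc k) (P v) + c (n + Suc k) (P v)) - (P (c (n + k) (P v)) + P (c (n + k) (P v)))) z"
    by (simp only: lc_Fadd lc_Fdiff)
  also have "\<dots> = lc h (\<lambda>n. c (n + Suc (Suc k))) z"
    by (rule lc_cong) (simp add: c_rec)
  also have "\<dots> = lc (X^2 * h) (\<lambda>n. c (n + k)) z"
    by (simp add: lc_pCons power2_eq_square)
  finally show "dl z ((P ^^ k) (Q y)) = lc (X^2 * h) (\<lambda>n. c (n + k)) z" .
qed

lemma rep_E2: assumes "rep y h" shows "rep (E2 y) (X^2 * h)"
proof -
  have "rep (E2 y) (X * (X * h) + X * (X * h) - X^2 * h)"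
    unfolding E2_def by (intro rep_diff rep_add rep_P rep_Q assms)
  then show ?thesis by (simp add: algebra_simps power2_eq_square)
qed

lemma rep_c: assumes "rep y h" shows "rep (c j y) (X^j * h)"
proof (induction j rule: nat_less_induct)
  case (1 n)
  consider "n = 0" | "n = Suc 0" | m where "n = Suc (Suc m)"
    by (metis not0_implies_Suc)
  then show ?case
  proof cases
    case 1 then show ?thesis using assms by simp
  next
    case 2 then show ?thesis using rep_P[OF assms] by simp
  next
    case 3
    have a: "rep (c m y) (X^m * h)" and b: "rep (c (Suc m) y) (X^Suc m * h)"
      using 1 3 by auto
    have "rep (c n y) (X * (X^Suc m * h) + X * (X^Suc m * h) - X^2 * (X^m * h))"
      unfolding 3 c.simps by (intro rep_diff rep_add rep_P rep_E2 a b)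
    then show ?thesis unfolding 3 by (simp add: algebra_simps power2_eq_square)
  qed
qed

lemma rep_lcc: assumes "rep y h" shows "rep (lc p (\<lambda>n. c (n + j)) y) (p * X^j * h)"
proof (induction p arbitrary: j rule: pCons_induct)
  case 0
  then show ?case using rep_0 by simp
next
  case (pCons b p)
  have "rep (s b (c j y) + lc p (\<lambda>n. c (n + Suc j)) y) (smult b (X^j * h) + p * X^Suc j * h)"
    by (intro rep_add rep_scale rep_c assms pCons)
  moreover have "smult b (X^j * h) + p * X^Suc j * h = pCons b p * X^j * h"
    by (simp add: algebra_simps)
  ultimately show ?case by (simp add: lc_pCons)
qed

lemma rep_dl: assumes "rep y h" "rep z hz" shows "rep (dl y z) (hz * h)"
  using rep_lcc[OF assms(1), of hz 0] repD0[OF assms(2), of y] by simp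

lemma rep_a: "rep a X"
proof -
  have "(\<forall>z. dl z ((P ^^ k) a) = c (Suc k) z) \<and> (\<forall>z. dl z (P ((P ^^ k) a)) = c (Suc (Suc k)) z)" for k
  proof (induction k)
    case 0
    then show ?case by (simp add: P_def Q_def E2_def c.simps(3))
  next
    case (Suc k)
    define w where "w = (P ^^ k) a"
    have IH1: "dl z w = c (Suc k) z" and IH2: "dl z (P w) = c (Suc (Suc k)) z" for z
      using Suc unfolding w_def by auto
    have "dl z (P ((P ^^ Suc k) a)) = c (Suc (Suc (Suc k))) z" for z
    proof -
      have "dl z (P ((P ^^ Suc k) a)) = dl z (P (P w))" by (simp add: w_def)
      also have "\<dots> = Q (dl z w) + (dl (P z) (P w) + dl (P z) (P w)) - P (P (dl z w)) - dl (P (P z)) w"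
        by (rule JP2)
      also have "\<dots> = Q (c (Suc k) z) + (c (Suc (Suc k)) (P z) + c (Suc (Suc k)) (P z)) - P (P (c (Suc k) z)) - c (Suc k) (P (P z))"
        by (simp only: IH1 IH2)
      also have "\<dots> = c (Suc (Suc (Suc k))) z"
        unfolding c_rec[of "Suc k" z] cP by (simp add: algebra_simps)
      finally show ?thesis .
    qed
    then show ?case using IH2 by (simp add: w_def)
  qed
  then show ?thesis unfolding rep_def by (simp add: lc_pCons)
qed

lemma rep_gen: "y \<in> generated s dl (\<lambda>x y. dl y x) {a} \<Longrightarrow> \<exists>h. rep y h"
proof (induction rule: generated.induct)
  case (gen_base x) then show ?case using rep_a by auto
next
  case gen_zero then show ?case using rep_0 by auto
next
  case (gen_add x y) then show ?case using rep_add by blast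
next
  case (gen_scale x r) then show ?case using rep_scale by blast
next
  case (gen_dl x y) then show ?case using rep_dl by blast
next
  case (gen_dr x y) then show ?case using rep_dl by blast
qed

end

context JD begin

definition sp :: "'k \<Rightarrow> 'v \<times> 'v \<Rightarrow> 'v \<times> 'v" where
  "sp r m = (s r (fst m), s r (snd m))"

lemma fst_sp[simp]: "fst (sp r m) = s r (fst m)" and snd_sp[simp]: "snd (sp r m) = s r (snd m)"
  by (simp_all add: sp_def)

sublocale P2: VS sp
  by unfold_locales (simp_all add: sp_def scale_right_distrib scale_left_distrib prod_eq_iff)

lemma fst_lc: "(\<And>n. fst (F n m) = G n y) \<Longrightarrow> fst (P2.lc h F m) = lc h G y"
  by (simp add: P2.lc_def lc_def fst_sum del: sum.lessThan_Suc)
lemma snd_lc: "(\<And>n. snd (F n m) = G n y) \<Longrightarrow> snd (P2.lc h F m) = lc h G y"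
  by (simp add: P2.lc_def lc_def snd_sum del: sum.lessThan_Suc)

definition U :: "'v \<times> 'v \<Rightarrow> 'v \<times> 'v" where
  "U m = (snd m, P (snd m) + P (snd m) - E2 (fst m))"
definition V :: "'v \<times> 'v \<Rightarrow> 'v \<times> 'v" where
  "V m = (P (fst m) + P (fst m) - snd m, E2 (fst m))"
definition g :: "'v \<Rightarrow> 'v \<times> 'v" where "g y = (y, P y)"

lemma lin_U: "P2.lin U"
  unfolding P2.lin_def U_def using linD[OF lin_P] linD[OF lin_E2]
  by (simp add: sp_def scale_right_diff_distrib scale_right_distrib algebra_simps)
lemma lin_V: "P2.lin V"
  unfolding P2.lin_def V_def using linD[OF lin_P] linD[OF lin_E2]
  by (simp add: sp_def scale_right_diff_distrib scale_right_distrib algebra_simps)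

lemma UV: "U (V m) = V (U m)"
  by (simp add: U_def V_def linD[OF lin_P] linD[OF lin_E2] E2P)

definition D1 :: "('v \<times> 'v) set" where
  "D1 = {m. \<exists>h. rep (fst m) h \<and> rep (snd m) (X * h)}"
definition Kp :: "'k poly set" where "Kp = {k. rep 0 k}"
definition DD :: "('v \<times> 'v) set" where
  "DD = {m \<in> D1. \<forall>k\<in>Kp. P2.peval k U m = 0 \<and> P2.peval k V m = 0}"
definition th :: "'v \<times> 'v \<Rightarrow> 'k poly" where "th m = (SOME h. rep (fst m) h)"
definition Lam :: "'v \<times> 'v \<Rightarrow> 'v \<times> 'v \<Rightarrow> 'v \<times> 'v" where "Lam m = P2.peval (th m) U"
definition Rho :: "'v \<times> 'v \<Rightarrow> 'v \<times> 'v \<Rightarrow> 'v \<times> 'v" where "Rho m = P2.peval (th m) V"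

lemma rep_snd: assumes "m \<in> D1" "rep (fst m) h" shows "rep (snd m) (X * h)"
proof -
  obtain h0 where h0: "rep (fst m) h0" "rep (snd m) (X * h0)" using assms(1) by (auto simp: D1_def)
  have "rep (fst m - fst m) (h - h0)" by (rule rep_diff[OF assms(2) h0(1)])
  then have "rep (P 0) (X * (h - h0))" by (intro rep_P) simp
  then have "rep (snd m + P 0) (X * h0 + X * (h - h0))" by (intro rep_add h0)
  then show ?thesis by (simp add: linD[OF lin_P] algebra_simps)
qed

lemma U_D1: assumes "m \<in> D1" "rep (fst m) h" shows "U m \<in> D1" "rep (fst (U m)) (X * h)"
proof -
  have s: "rep (snd m) (X * h)" by (rule rep_snd[OF assms])
  have "rep (P (snd m) + P (snd m) - E2 (fst m)) (X * (X * h) + X * (X * h) - X^2 * h)"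
    by (intro rep_diff rep_add rep_P rep_E2 s assms(2))
  then have "rep (snd (U m)) (X * (X * h))" by (simp add: U_def algebra_simps power2_eq_square)
  then show "U m \<in> D1" "rep (fst (U m)) (X * h)" using s by (auto simp: D1_def U_def)
qed

lemma V_D1: assumes "m \<in> D1" "rep (fst m) h" shows "V m \<in> D1" "rep (fst (V m)) (X * h)"
proof -
  have s: "rep (snd m) (X * h)" by (rule rep_snd[OF assms])
  have "rep (P (fst m) + P (fst m) - snd m) (X * h + X * h - X * h)"
    by (intro rep_diff rep_add rep_P s assms(2))
  then have f: "rep (fst (V m)) (X * h)" by (simp add: V_def)
  have "rep (snd (V m)) (X^2 * h)" by (simp add: V_def rep_E2 assms(2))
  then have "rep (snd (V m)) (X * (X * h))" by (simp add: power2_eq_square algebra_simps)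
  then show "V m \<in> D1" "rep (fst (V m)) (X * h)" using f by (auto simp: D1_def)
qed

lemma D1_add: assumes "m \<in> D1" "m' \<in> D1" shows "m + m' \<in> D1"
proof -
  obtain h h' where a: "rep (fst m) h" "rep (snd m) (X * h)" "rep (fst m') h'" "rep (snd m') (X * h')"
    using assms by (auto simp: D1_def)
  have A: "rep (fst (m + m')) (h + h')" unfolding fst_add by (rule rep_add[OF a(1,3)])
  have B: "rep (snd (m + m')) (X * h + X * h')" unfolding snd_add by (rule rep_add[OF a(2,4)])
  have e: "X * h + X * h' = X * (h + h')" by (simp only: distrib_left)
  have "rep (snd (m + m')) (X * (h + h'))" using B unfolding e .
  then show ?thesis using A unfolding D1_def by blast
qed
lemma D1_sp: assumes "m \<in> D1" shows "sp r m \<in> D1"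
proof -
  obtain h where a: "rep (fst m) h" "rep (snd m) (X * h)"
    using assms by (auto simp: D1_def)
  have A: "rep (fst (sp r m)) (smult r h)" unfolding fst_sp by (rule rep_scale[OF a(1)])
  have B: "rep (snd (sp r m)) (smult r (X * h))" unfolding snd_sp by (rule rep_scale[OF a(2)])
  have e: "smult r (X * h) = X * smult r h" by (simp only: mult_smult_right)
  have "rep (snd (sp r m)) (X * smult r h)" using B unfolding e .
  then show ?thesis using A unfolding D1_def by blast
qed
lemma D1_0: "0 \<in> D1"
  unfolding D1_def using rep_0 by (auto intro!: exI[of _ 0])

lemma peval_U_D1: assumes "m \<in> D1" "rep (fst m) h"
  shows "P2.peval p U m \<in> D1 \<and> rep (fst (P2.peval p U m)) (p * h)"
proof (induction p rule: pCons_induct)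
  case 0 then show ?case using D1_0 rep_0 by simp
next
  case (pCons b p)
  then have A: "P2.peval p U m \<in> D1" and B: "rep (fst (P2.peval p U m)) (p * h)" by auto
  have e: "P2.peval (pCons b p) U m = sp b m + U (P2.peval p U m)" by (rule P2.peval_pCons[OF lin_U])
  have "rep (fst (U (P2.peval p U m))) (X * (p * h))" by (rule U_D1(2)[OF A B])
  then have "rep (s b (fst m) + fst (U (P2.peval p U m))) (smult b h + X * (p * h))"
    by (intro rep_add rep_scale assms(2))
  then have "rep (fst (sp b m + U (P2.peval p U m))) (smult b h + X * (p * h))"
    by simp
  moreover have "smult b h + X * (p * h) = pCons b p * h" by (simp add: algebra_simps)
  ultimately show ?case using e D1_add D1_sp U_D1(1)[OF A B] assms(1) by auto
qed

lemma peval_V_D1: assumes "m \<in> D1" "rep (fst m) h"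
  shows "P2.peval p V m \<in> D1 \<and> rep (fst (P2.peval p V m)) (p * h)"
proof (induction p rule: pCons_induct)
  case 0 then show ?case using D1_0 rep_0 by simp
next
  case (pCons b p)
  then have A: "P2.peval p V m \<in> D1" and B: "rep (fst (P2.peval p V m)) (p * h)" by auto
  have e: "P2.peval (pCons b p) V m = sp b m + V (P2.peval p V m)" by (rule P2.peval_pCons[OF lin_V])
  have "rep (fst (V (P2.peval p V m))) (X * (p * h))" by (rule V_D1(2)[OF A B])
  then have "rep (s b (fst m) + fst (V (P2.peval p V m))) (smult b h + X * (p * h))"
    by (intro rep_add rep_scale assms(2))
  then have "rep (fst (sp b m + V (P2.peval p V m))) (smult b h + X * (p * h))"
    by simp
  moreover have "smult b h + X * (p * h) = pCons b p * h" by (simp add: algebra_simps)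
  ultimately show ?case using e D1_add D1_sp V_D1(1)[OF A B] assms(1) by auto
qed

lemma DD_D1: "m \<in> DD \<Longrightarrow> m \<in> D1" by (simp add: DD_def)

lemma UU: "U (U m) = U (U m)" ..

lemma DD_U: assumes "m \<in> DD" shows "U m \<in> DD"
proof -
  have "m \<in> D1" using assms by (simp add: DD_def)
  then obtain h where "rep (fst m) h" by (auto simp: D1_def)
  then have "U m \<in> D1" using U_D1 \<open>m \<in> D1\<close> by blast
  moreover have "P2.peval k U (U m) = 0 \<and> P2.peval k V (U m) = 0" if "k \<in> Kp" for k
  proof -
    have "P2.peval k U (U m) = U (P2.peval k U m)" by (rule P2.peval_comm[OF lin_U, symmetric]) simp
    moreover have "P2.peval k V (U m) = U (P2.peval k V m)" by (rule P2.peval_comm[OF lin_U, symmetric]) (rule UV)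
    ultimately show ?thesis using assms that P2.linD(3)[OF lin_U] by (simp add: DD_def)
  qed
  ultimately show ?thesis by (simp add: DD_def)
qed

lemma DD_V: assumes "m \<in> DD" shows "V m \<in> DD"
proof -
  have "m \<in> D1" using assms by (simp add: DD_def)
  then obtain h where "rep (fst m) h" by (auto simp: D1_def)
  then have "V m \<in> D1" using V_D1 \<open>m \<in> D1\<close> by blast
  moreover have "P2.peval k U (V m) = 0 \<and> P2.peval k V (V m) = 0" if "k \<in> Kp" for k
  proof -
    have "P2.peval k U (V m) = V (P2.peval k U m)" by (rule P2.peval_comm[OF lin_V, symmetric]) (rule UV[symmetric])
    moreover have "P2.peval k V (V m) = V (P2.peval k V m)" by (rule P2.peval_comm[OF lin_V, symmetric]) simp
    ultimately show ?thesis using assms that P2.linD(3)[OF lin_V] by (simp add: DD_def)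
  qed
  ultimately show ?thesis by (simp add: DD_def)
qed

lemma DD_add: assumes "m \<in> DD" "m' \<in> DD" shows "m + m' \<in> DD"
  using assms unfolding DD_def
  by (auto simp: D1_add P2.linD(1)[OF P2.lin_peval[OF lin_U]] P2.linD(1)[OF P2.lin_peval[OF lin_V]])

lemma DD_sp: "m \<in> DD \<Longrightarrow> sp r m \<in> DD"
  unfolding DD_def using P2.linD(2)[OF P2.lin_peval[OF lin_U]] P2.linD(2)[OF P2.lin_peval[OF lin_V]]
  by (auto simp: D1_sp)

lemma DD_0: "0 \<in> DD"
  unfolding DD_def using P2.linD(3)[OF P2.lin_peval[OF lin_U]] P2.linD(3)[OF P2.lin_peval[OF lin_V]]
  by (auto simp: D1_0)

lemma DD_peval_U: "m \<in> DD \<Longrightarrow> P2.peval p U m \<in> DD"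
proof (induction p rule: pCons_induct)
  case 0 then show ?case by (simp add: DD_0)
next
  case (pCons b p) then show ?case
    unfolding P2.peval_pCons[OF lin_U] by (intro DD_add DD_sp DD_U) auto
qed
lemma DD_peval_V: "m \<in> DD \<Longrightarrow> P2.peval p V m \<in> DD"
proof (induction p rule: pCons_induct)
  case 0 then show ?case by (simp add: DD_0)
next
  case (pCons b p) then show ?case
    unfolding P2.peval_pCons[OF lin_V] by (intro DD_add DD_sp DD_V) auto
qed

lemma th_rep: "m \<in> D1 \<Longrightarrow> rep (fst m) (th m)"
  unfolding th_def by (rule someI_ex) (auto simp: D1_def)

lemma indep: assumes "m \<in> DD" "rep y h" "rep y h'"
  shows "P2.peval h U m = P2.peval h' U m" "P2.peval h V m = P2.peval h' V m"
proof -
  have "rep (y - y) (h - h')" by (rule rep_diff[OF assms(2,3)])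
  then have "h - h' \<in> Kp" by (simp add: Kp_def)
  then have "P2.peval (h - h') U m = 0" "P2.peval (h - h') V m = 0" using assms(1) by (auto simp: DD_def)
  then show "P2.peval h U m = P2.peval h' U m" "P2.peval h V m = P2.peval h' V m"
    by (simp_all add: P2.peval_diff)
qed

lemma Lam_DD: "x \<in> DD \<Longrightarrow> y \<in> DD \<Longrightarrow> Lam x y \<in> DD"
  by (simp add: Lam_def DD_peval_U)
lemma Rho_DD: "x \<in> DD \<Longrightarrow> y \<in> DD \<Longrightarrow> Rho x y \<in> DD"
  by (simp add: Rho_def DD_peval_V)

lemma rep_Lam: "x \<in> DD \<Longrightarrow> y \<in> DD \<Longrightarrow> rep (fst (Lam x y)) (th x * th y)"
  unfolding Lam_def using peval_U_D1[OF DD_D1 th_rep[OF DD_D1]] by blast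
lemma rep_Rho: "x \<in> DD \<Longrightarrow> y \<in> DD \<Longrightarrow> rep (fst (Rho x y)) (th x * th y)"
  unfolding Rho_def using peval_V_D1[OF DD_D1 th_rep[OF DD_D1]] by blast

lemma Lam_eq: "x \<in> DD \<Longrightarrow> z \<in> DD \<Longrightarrow> rep (fst x) h \<Longrightarrow> Lam x z = P2.peval h U z"
  unfolding Lam_def by (rule indep(1)[OF _ th_rep[OF DD_D1]])
lemma Rho_eq: "x \<in> DD \<Longrightarrow> z \<in> DD \<Longrightarrow> rep (fst x) h \<Longrightarrow> Rho x z = P2.peval h V z"
  unfolding Rho_def by (rule indep(2)[OF _ th_rep[OF DD_D1]])

lemma id_a: assumes "x \<in> DD" "y \<in> DD" "z \<in> DD" shows "Lam (Lam x y) z = Lam x (Lam y z)"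
proof -
  have "Lam (Lam x y) z = P2.peval (th x * th y) U z"
    by (rule Lam_eq[OF Lam_DD[OF assms(1,2)] assms(3) rep_Lam[OF assms(1,2)]])
  then show ?thesis by (simp add: P2.peval_mult[OF lin_U] Lam_def)
qed
lemma id_b: assumes "x \<in> DD" "y \<in> DD" "z \<in> DD" shows "Rho (Rho z y) x = Rho z (Rho y x)"
proof -
  have "Rho (Rho z y) x = P2.peval (th z * th y) V x"
    by (rule Rho_eq[OF Rho_DD[OF assms(3,2)] assms(1) rep_Rho[OF assms(3,2)]])
  then show ?thesis by (simp add: P2.peval_mult[OF lin_V] Rho_def)
qed
lemma id_c: "Rho z (Lam x y) = Lam x (Rho z y)"
proof -
  have "P2.peval p V (U w) = U (P2.peval p V w)" for p w
    by (rule P2.peval_comm[OF lin_U, symmetric]) (rule UV)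
  then show ?thesis
    unfolding Lam_def Rho_def by (rule P2.peval_comm[OF P2.lin_peval[OF lin_V]])
qed
lemma id_d: assumes "x \<in> DD" "y \<in> DD" "z \<in> DD" shows "Lam (Rho y x) z = Lam (Lam x y) z"
proof -
  have "Lam (Rho y x) z = P2.peval (th y * th x) U z"
    by (rule Lam_eq[OF Rho_DD[OF assms(2,1)] assms(3) rep_Rho[OF assms(2,1)]])
  moreover have "Lam (Lam x y) z = P2.peval (th x * th y) U z"
    by (rule Lam_eq[OF Lam_DD[OF assms(1,2)] assms(3) rep_Lam[OF assms(1,2)]])
  ultimately show ?thesis by (simp add: mult.commute)
qed
lemma id_e: assumes "x \<in> DD" "y \<in> DD" "z \<in> DD" shows "Rho (Lam y z) x = Rho (Rho z y) x"
proof -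
  have "Rho (Lam y z) x = P2.peval (th y * th z) V x"
    by (rule Rho_eq[OF Lam_DD[OF assms(2,3)] assms(1) rep_Lam[OF assms(2,3)]])
  moreover have "Rho (Rho z y) x = P2.peval (th z * th y) V x"
    by (rule Rho_eq[OF Rho_DD[OF assms(3,2)] assms(1) rep_Rho[OF assms(3,2)]])
  ultimately show ?thesis by (simp add: mult.commute)
qed

lemma rep_fst_add: "x \<in> DD \<Longrightarrow> x' \<in> DD \<Longrightarrow> rep (fst (x + x')) (th x + th x')"
  by (simp add: rep_add th_rep DD_D1)
lemma rep_fst_sp: "x \<in> DD \<Longrightarrow> rep (fst (sp r x)) (smult r (th x))"
  by (simp add: rep_scale th_rep DD_D1)

lemma Lam_addL: assumes "x \<in> DD" "x' \<in> DD" "y \<in> DD" shows "Lam (x + x') y = Lam x y + Lam x' y"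
  using Lam_eq[OF DD_add[OF assms(1,2)] assms(3) rep_fst_add[OF assms(1,2)]]
  by (simp add: P2.peval_add Lam_def)
lemma Rho_addL: assumes "x \<in> DD" "x' \<in> DD" "y \<in> DD" shows "Rho (x + x') y = Rho x y + Rho x' y"
  using Rho_eq[OF DD_add[OF assms(1,2)] assms(3) rep_fst_add[OF assms(1,2)]]
  by (simp add: P2.peval_add Rho_def)
lemma Lam_spL: assumes "x \<in> DD" "y \<in> DD" shows "Lam (sp r x) y = sp r (Lam x y)"
  using Lam_eq[OF DD_sp[OF assms(1)] assms(2) rep_fst_sp[OF assms(1)]]
  by (simp add: P2.peval_smult Lam_def)
lemma Rho_spL: assumes "x \<in> DD" "y \<in> DD" shows "Rho (sp r x) y = sp r (Rho x y)"
  using Rho_eq[OF DD_sp[OF assms(1)] assms(2) rep_fst_sp[OF assms(1)]]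
  by (simp add: P2.peval_smult Rho_def)
lemma Lam_addR: "Lam x (y + y') = Lam x y + Lam x y'"
  unfolding Lam_def by (rule P2.linD(1)[OF P2.lin_peval[OF lin_U]])
lemma Rho_addR: "Rho x (y + y') = Rho x y + Rho x y'"
  unfolding Rho_def by (rule P2.linD(1)[OF P2.lin_peval[OF lin_V]])
lemma Lam_spR: "Lam x (sp r y) = sp r (Lam x y)"
  unfolding Lam_def by (rule P2.linD(2)[OF P2.lin_peval[OF lin_U]])
lemma Rho_spR: "Rho x (sp r y) = sp r (Rho x y)"
  unfolding Rho_def by (rule P2.linD(2)[OF P2.lin_peval[OF lin_V]])

end

context JD begin

lemma Ug: "(U ^^ j) (g y) = (c j y, c (Suc j) y)"
  by (induction j) (simp_all add: g_def U_def c.simps(3))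

lemma Vg: "(V ^^ j) (g y) = (c j y, P (c j y) + P (c j y) - c (Suc j) y)"
proof (induction j)
  case 0 then show ?case by (simp add: g_def)
next
  case (Suc j) then show ?case by (simp add: V_def c.simps(3))
qed

lemma peval_Ug: "P2.peval p U (g y) = (lc p c y, lc p (\<lambda>n. c (Suc n)) y)"
  unfolding P2.peval_def
  by (rule prod_eqI) (simp_all add: fst_lc[where G=c] snd_lc[where G="\<lambda>n. c (Suc n)"] Ug)

lemma peval_Vg: "P2.peval p V (g y) = (lc p c y, P (lc p c y) + P (lc p c y) - lc p (\<lambda>n. c (Suc n)) y)"
proof -
  have "snd (P2.peval p V (g y)) = lc p (\<lambda>n w. P (c n w) + P (c n w) - c (Suc n) w) y"
    unfolding P2.peval_def by (rule snd_lc) (simp add: Vg)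
  also have "\<dots> = P (lc p c y) + P (lc p c y) - lc p (\<lambda>n. c (Suc n)) y"
    by (simp only: lc_Fadd lc_Fdiff lc_map[OF lin_P])
  finally show ?thesis
    unfolding P2.peval_def by (intro prod_eqI) (simp_all add: fst_lc[where G=c] Vg)
qed

lemma g_DD: assumes "rep y h" shows "g y \<in> DD"
proof -
  have "g y \<in> D1" using assms rep_P[OF assms] by (auto simp: D1_def g_def)
  moreover have "P2.peval k U (g y) = 0 \<and> P2.peval k V (g y) = 0" if "k \<in> Kp" for k
  proof -
    have k: "rep 0 k" using that by (simp add: Kp_def)
    have "lc k (\<lambda>n. c (n + j)) z = 0" for j z using repD[OF k, of z j] by (simp add: linD[OF lin_Pk])
    from this[of 0 y] this[of 1 y] show ?thesis by (simp add: peval_Ug peval_Vg linD[OF lin_P] zero_prod_def)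
  qed
  ultimately show ?thesis by (simp add: DD_def)
qed

lemma half: "s (1/2) (x + x) = x"
proof -
  have "s (1/2) (x + x) = s (1/2) x + s (1/2) x" by (rule scale_right_distrib)
  also have "\<dots> = s (1/2 + 1/2) x" by (rule scale_left_distrib[symmetric])
  finally show ?thesis by simp
qed

lemma compat: assumes "rep x hx" "rep y hy"
  shows "sp (1/2) (Rho (g y) (g x) + Lam (g y) (g x)) = g (dl x y)"
proof -
  have r: "rep (fst (g y)) hy" using assms(2) by (simp add: g_def)
  have "Rho (g y) (g x) = P2.peval hy V (g x)" by (rule Rho_eq[OF g_DD[OF assms(2)] g_DD[OF assms(1)] r])
  moreover have "Lam (g y) (g x) = P2.peval hy U (g x)" by (rule Lam_eq[OF g_DD[OF assms(2)] g_DD[OF assms(1)] r])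
  moreover have "lc hy c x = dl x y" using repD0[OF assms(2), of x] by simp
  ultimately show ?thesis by (simp only: peval_Ug peval_Vg) (simp add: sp_def g_def half)
qed

lemma g_add: "g (x + y) = g x + g y" by (simp add: g_def linD[OF lin_P])
lemma g_sc: "g (s r x) = sp r (g x)" by (simp add: g_def sp_def linD[OF lin_P])
lemma g_inj: "inj g" by (rule injI) (simp add: g_def)

end

locale JD1 = JD s dl a for s :: "'k::field_char_0 \<Rightarrow> 'v::ab_group_add \<Rightarrow> 'v" and dl a +
  assumes gen: "generated s dl (\<lambda>x y. dl y x) {a} = UNIV"
begin

lemma allrep: "\<exists>h. rep y h" using rep_gen gen by auto

definition B0 where "B0 = extend_basis {}"
lemma B0i: "independent B0"
  unfolding B0_def by (rule independent_extend_basis[OF independent_empty])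
lemma B0s: "span B0 = UNIV"
  unfolding B0_def by (rule span_extend_basis[OF independent_empty])
lemmas B0 = B0i B0s

definition co :: "'v \<Rightarrow> 'v \<Rightarrow> 'k" where "co = representation B0"

lemma co_add: "co (x + y) = (\<lambda>b. co x b + co y b)"
  unfolding co_def by (rule representation_add) (simp_all add: B0)
lemma co_sc: "co (s r x) = (\<lambda>b. r * co x b)"
  unfolding co_def by (rule representation_scale) (simp_all add: B0)
lemma co_inj: assumes "co x = co y" shows "x = y"
proof -
  have "x = (\<Sum>b | representation B0 x b \<noteq> 0. s (representation B0 x b) b)"
    by (rule sum_nonzero_representation_eq[symmetric]) (simp_all add: B0)
  also have "\<dots> = (\<Sum>b | representation B0 y b \<noteq> 0. s (representation B0 y b) b)"
    using assms by (simp add: co_def)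
  also have "\<dots> = y"
    by (rule sum_nonzero_representation_eq) (simp_all add: B0)
  finally show ?thesis .
qed

definition emb :: "'v \<times> 'v \<Rightarrow> 'v list \<Rightarrow> 'k" where
  "emb m = (\<lambda>l. if length l = 1 then co (fst m) (hd l) else if length l = 2 then co (snd m) (hd l) else 0)"

lemma emb_add: "emb (m + m') = emb m + emb m'"
  by (rule ext) (simp add: emb_def co_add)
lemma emb_sp: "emb (sp r m) = fscale r (emb m)"
  by (rule ext) (simp add: emb_def co_sc fscale_def)
lemma emb_inj: "inj emb"
proof (rule injI)
  fix m m' assume e: "emb m = emb m'"
  have "co (fst m) b = co (fst m') b" for b using fun_cong[OF e, of "[b]"] by (simp add: emb_def)
  moreover have "co (snd m) b = co (snd m') b" for b using fun_cong[OF e, of "[b, b]"] by (simp add: emb_def)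
  ultimately show "m = m'" by (metis co_inj ext prod_eqI)
qed
lemma emb_0: "emb 0 = 0"
  by (rule ext) (simp add: emb_def co_def representation_zero)

lemma ie[simp]: "inv emb (emb m) = m" by (rule inv_f_f[OF emb_inj])

definition Dl' where "Dl' u w = emb (Rho (inv emb w) (inv emb u))"
definition Dr' where "Dr' u w = emb (Lam (inv emb u) (inv emb w))"

lemma vs_fscale: "vector_space (fscale :: 'k \<Rightarrow> ('v list \<Rightarrow> 'k) \<Rightarrow> _)"
  by unfold_locales (simp_all add: fscale_def fun_eq_iff algebra_simps)

lemma Dl'_e: "Dl' (emb m) (emb n) = emb (Rho n m)" by (simp add: Dl'_def)
lemma Dr'_e: "Dr' (emb m) (emb n) = emb (Lam m n)" by (simp add: Dr'_def)

lemma bil_Dl: "bilinear_on fscale (emb ` DD) Dl'"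
  unfolding bilinear_on_def
proof (intro conjI ballI allI)
  fix x y assume "x \<in> emb ` DD" "y \<in> emb ` DD"
  then obtain m n where "m \<in> DD" "n \<in> DD" "x = emb m" "y = emb n" by auto
  then show "Dl' x y \<in> emb ` DD" by (simp add: Dl'_e Rho_DD)
next
  fix x y z assume "x \<in> emb ` DD" "y \<in> emb ` DD" "z \<in> emb ` DD"
  then obtain m n p where D: "m \<in> DD" "n \<in> DD" "p \<in> DD" and e: "x = emb m" "y = emb n" "z = emb p" by auto
  show "Dl' (x + y) z = Dl' x z + Dl' y z"
    unfolding e emb_add[symmetric] Dl'_e using D by (simp add: Rho_addR Rho_addL emb_add)
  show "Dl' z (x + y) = Dl' z x + Dl' z y"
    unfolding e emb_add[symmetric] Dl'_e using D by (simp add: Rho_addR Rho_addL emb_add)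
next
  fix r x y assume "x \<in> emb ` DD" "y \<in> emb ` DD"
  then obtain m n where D: "m \<in> DD" "n \<in> DD" and e: "x = emb m" "y = emb n" by auto
  show "Dl' (fscale r x) y = fscale r (Dl' x y)"
    unfolding e emb_sp[symmetric] Dl'_e using D by (simp add: Rho_spR Rho_spL emb_sp)
  show "Dl' x (fscale r y) = fscale r (Dl' x y)"
    unfolding e emb_sp[symmetric] Dl'_e using D by (simp add: Rho_spR Rho_spL emb_sp)
qed

lemma bil_Dr: "bilinear_on fscale (emb ` DD) Dr'"
  unfolding bilinear_on_def
proof (intro conjI ballI allI)
  fix x y assume "x \<in> emb ` DD" "y \<in> emb ` DD"
  then obtain m n where "m \<in> DD" "n \<in> DD" "x = emb m" "y = emb n" by auto
  then show "Dr' x y \<in> emb ` DD" by (simp add: Dr'_e Lam_DD)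
next
  fix x y z assume "x \<in> emb ` DD" "y \<in> emb ` DD" "z \<in> emb ` DD"
  then obtain m n p where D: "m \<in> DD" "n \<in> DD" "p \<in> DD" and e: "x = emb m" "y = emb n" "z = emb p" by auto
  show "Dr' (x + y) z = Dr' x z + Dr' y z"
    unfolding e emb_add[symmetric] Dr'_e using D by (simp add: Lam_addR Lam_addL emb_add)
  show "Dr' z (x + y) = Dr' z x + Dr' z y"
    unfolding e emb_add[symmetric] Dr'_e using D by (simp add: Lam_addR Lam_addL emb_add)
next
  fix r x y assume "x \<in> emb ` DD" "y \<in> emb ` DD"
  then obtain m n where D: "m \<in> DD" "n \<in> DD" and e: "x = emb m" "y = emb n" by auto
  show "Dr' (fscale r x) y = fscale r (Dr' x y)"
    unfolding e emb_sp[symmetric] Dr'_e using D by (simp add: Lam_spR Lam_spL emb_sp)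
  show "Dr' x (fscale r y) = fscale r (Dr' x y)"
    unfolding e emb_sp[symmetric] Dr'_e using D by (simp add: Lam_spR Lam_spL emb_sp)
qed

lemma sub: "subspace_on fscale (emb ` DD)"
  unfolding subspace_on_def
proof (intro conjI ballI allI)
  show "0 \<in> emb ` DD" using DD_0 emb_0 by (metis image_eqI)
next
  fix x y assume "x \<in> emb ` DD" "y \<in> emb ` DD"
  then obtain m n where "m \<in> DD" "n \<in> DD" "x = emb m" "y = emb n" by auto
  then show "x + y \<in> emb ` DD" by (simp add: emb_add[symmetric] DD_add)
next
  fix r x assume "x \<in> emb ` DD"
  then obtain m where "m \<in> DD" "x = emb m" by auto
  then show "fscale r x \<in> emb ` DD" by (simp add: emb_sp[symmetric] DD_sp)
qed

lemma assoc: "assoc_dialgebra_on fscale (emb ` DD) Dl' Dr'"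
  unfolding assoc_dialgebra_on_def zero_dialgebra_on_def
proof (intro conjI vs_fscale sub bil_Dl bil_Dr ballI)
  fix x y z assume "x \<in> emb ` DD" "y \<in> emb ` DD" "z \<in> emb ` DD"
  then obtain m n p where D: "m \<in> DD" "n \<in> DD" "p \<in> DD" and e: "x = emb m" "y = emb n" "z = emb p" by auto
  show "Dr' (Dl' x y) z = Dr' (Dr' x y) z" unfolding e Dl'_e Dr'_e using D by (simp add: id_d)
  show "Dl' x (Dr' y z) = Dl' x (Dl' y z)" unfolding e Dl'_e Dr'_e using D by (simp add: id_e)
  show "Dr' (Dr' x y) z = Dr' x (Dr' y z)" unfolding e Dl'_e Dr'_e using D by (simp add: id_a)
  show "Dl' (Dl' x y) z = Dl' x (Dl' y z)" unfolding e Dl'_e Dr'_e using D by (simp add: id_b)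
  show "Dl' (Dr' x y) z = Dr' x (Dl' y z)" unfolding e Dl'_e Dr'_e using D by (simp add: id_c)
qed

theorem special: "special_dialgebra s dl (\<lambda>x y. dl y x)"
  unfolding special_dialgebra_def
proof (intro exI conjI)
  show "assoc_dialgebra_on fscale (emb ` DD) Dl' Dr'" by (rule assoc)
  show "inj (\<lambda>x. emb (g x))" using inj_compose[OF emb_inj g_inj] by (simp add: comp_def)
  show "range (\<lambda>x. emb (g x)) \<subseteq> emb ` DD" using allrep g_DD by auto
  show "\<forall>x y. emb (g (x + y)) = emb (g x) + emb (g y)" by (simp add: g_add emb_add)
  show "\<forall>r x. emb (g (s r x)) = fscale r (emb (g x))" by (simp add: g_sc emb_sp)
  show "\<forall>x y. emb (g (dl x y)) = fscale (1/2) (Dl' (emb (g x)) (emb (g y)) + Dr' (emb (g y)) (emb (g x)))"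
  proof (intro allI)
    fix x y
    obtain hx hy where "rep x hx" "rep y hy" using allrep by blast
    then show "emb (g (dl x y)) = fscale (1/2) (Dl' (emb (g x)) (emb (g y)) + Dr' (emb (g y)) (emb (g x)))"
      by (simp add: Dl'_def Dr'_def compat[symmetric] emb_add[symmetric] emb_sp[symmetric])
  qed
  show "\<forall>x y. emb (g (dl y x)) = fscale (1/2) (Dr' (emb (g x)) (emb (g y)) + Dl' (emb (g y)) (emb (g x)))"
  proof (intro allI)
    fix x y
    obtain hx hy where "rep x hx" "rep y hy" using allrep by blast
    then show "emb (g (dl y x)) = fscale (1/2) (Dr' (emb (g x)) (emb (g y)) + Dl' (emb (g y)) (emb (g x)))"
      by (simp add: Dl'_def Dr'_def compat[symmetric] emb_add[symmetric] emb_sp[symmetric] add.commute)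
  qed
qed

end

theorem mainTheorem3:
  fixes s :: "'k::field_char_0 \<Rightarrow> 'v::ab_group_add \<Rightarrow> 'v"
    and dl dr :: "'v \<Rightarrow> 'v \<Rightarrow> 'v"
  assumes "jordan_dialgebra_on s UNIV dl dr"
    and "\<exists>a. generated s dl dr {a} = UNIV"
  shows "special_dialgebra s dl dr"
proof -
  obtain a where gen: "generated s dl dr {a} = UNIV" using assms(2) by blast
  have Z: "zero_dialgebra_on s UNIV dl dr" and comm: "\<And>x y. dr x y = dl y x"
    and JJ: "\<And>x i. i \<in> {1..4} \<Longrightarrow> J_dot dl dr i x = 0"
    using assms(1) unfolding jordan_dialgebra_on_def by auto
  have dr: "dr = (\<lambda>x y. dl y x)" using comm by (intro ext) simp
  have vs: "vector_space s" and bl: "bilinear_on s UNIV dl"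
    and zi: "\<And>x y z. dr (dl x y) z = dr (dr x y) z"
    using Z unfolding zero_dialgebra_on_def by auto
  have J1: "J_dot dl (\<lambda>x y. dl y x) 1 (\<lambda>j. if j = 1 then z else if j = 2 then w else a) = 0" for z w
    using JJ[of 1] dr by simp
  have J4: "J_dot dl (\<lambda>x y. dl y x) 4 (\<lambda>j. if j = 4 then z else if j = 3 then w else a) = 0" for z w
    using JJ[of 4] dr by simp
  have J2: "J_dot dl (\<lambda>x y. dl y x) 2 (\<lambda>j. if j = 2 then z else a) = 0" for z
    using JJ[of 2] dr by simp
  have "JD1 s dl a"
  proof (intro JD1.intro JD.intro JD_axioms.intro JD1_axioms.intro)
    show "VS s" unfolding VS_def by (rule vs)
    show "dl (x + y) z = dl x z + dl y z" for x y z using bl by (simp add: bilinear_on_def)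
    show "dl z (x + y) = dl z x + dl z y" for x y z using bl by (simp add: bilinear_on_def)
    show "dl (s c x) y = s c (dl x y)" for c x y using bl by (simp add: bilinear_on_def)
    show "dl x (s c y) = s c (dl x y)" for c x y using bl by (simp add: bilinear_on_def)
    show "dl z (dl x y) = dl z (dl y x)" for x y z using zi[of x y z] by (simp add: dr)
    show "dl z (dl (dl a a) w) + dl (dl (dl z a) w) a + dl (dl (dl z a) w) a - dl (dl z w) (dl a a) - dl (dl z a) (dl a w) - dl (dl z a) (dl w a) = 0" for z w
      using J1[of z w] by (simp add: J_dot_def)
    show "dl (dl (dl z w) a) a + dl z (dl (dl w a) a) + dl (dl (dl z a) a) w - dl (dl z w) (dl a a) - dl (dl z a) (dl w a) - dl (dl z a) (dl a w) = 0" for z w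
      using J4[of z w] by (simp add: J_dot_def)
    show "dl (dl z (dl a a)) a + dl (dl z (dl a a)) a + dl (dl z (dl a a)) a - dl (dl z a) (dl a a) - dl (dl z a) (dl a a) - dl (dl z a) (dl a a) = 0" for z
      using J2[of z] by (simp add: J_dot_def)
    show "generated s dl (\<lambda>x y. dl y x) {a} = UNIV" using gen by (simp add: dr)
  qed
  then interpret JD1 s dl a .
  show ?thesis unfolding dr by (rule special)
qed

end
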